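(* There is a homomorphism of $\mathbb{S}$--algebras $\iota_1:bH_n(q)\to\mathcal{E}_n(q)$ satisfying $\iota_1(e_i)=e_i$ and $\iota_1(z_i)=e_ig_i$ for all $i\in[n-1]$.
   Context: $\mathbb{S}=\mathbb{C}[q,q^{-1}]$ with $q$ an indeterminate. The tied--boxed Hecke algebra $bH_n(q)$ is the $\mathbb{S}$--algebra presented by generators $e_1,\dots,e_{n-1}$, $z_1,\dots,z_{n-1}$ and relations: $e_i^2=e_i$, $e_ie_j=e_je_i$ (all $i,j$); $z_iz_jz_i=z_jz_iz_j$ if $|i-j|=1$, $z_iz_j=z_jz_i$ if $|i-j|>1$; $e_iz_i=z_i$; $e_iz_j=z_je_i$ (all $i,j$); $z_i^2=e_i+(q-q^{-1})z_i$. The algebra of braids and ties $\mathcal{E}_n(q)$ is the $\mathbb{S}$--algebra presented by generators $e_1,\dots,e_{n-1}$, $g_1,\dots,g_{n-1}$ and relations: $e_i^2=e_i$, $e_ie_j=e_je_i$; $g_ig_jg_i=g_jg_ig_j$ if $|i-j|=1$, $g_ig_j=g_jg_i$ if $|i-j|>1$; $g_ie_i=e_ig_i$; $g_ie_j=e_jg_i$ if $|i-j|>1$; $e_ig_jg_i=g_jg_ie_j$ and $e_ie_jg_j=e_ig_je_i=g_je_ie_j$ if $|i-j|=1$; $g_i^2=1+(q-q^{-1})e_ig_i$. *)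

theory Defs
  imports Complex_Main "HOL-Library.Poly_Mapping"
begin

text \<open>Laurent polynomials over C, realised as the group algebra of the integers:
finitely supported functions int to complex with convolution product.\<close>
type_synonym laurent = "int \<Rightarrow>\<^sub>0 complex"

definition qL :: laurent where "qL = Poly_Mapping.single 1 1"
definition qinvL :: laurent where "qinvL = Poly_Mapping.single (-1) 1"

type_synonym 'g freealg = "'g list \<Rightarrow>\<^sub>0 laurent"

definition fa_mul :: "'g freealg \<Rightarrow> 'g freealg \<Rightarrow> 'g freealg" where
  "fa_mul p r = (\<Sum>u\<in>Poly_Mapping.keys p. \<Sum>v\<in>Poly_Mapping.keys r.
      Poly_Mapping.single (u @ v) (Poly_Mapping.lookup p u * Poly_Mapping.lookup r v))"

definition fa_scal :: "laurent \<Rightarrow> 'g freealg" where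
  "fa_scal c = Poly_Mapping.single [] c"

definition fa_one :: "'g freealg" where "fa_one = fa_scal 1"

definition fa_smult :: "laurent \<Rightarrow> 'g freealg \<Rightarrow> 'g freealg" where
  "fa_smult c p = fa_mul (fa_scal c) p"

definition fa_gen :: "'g \<Rightarrow> 'g freealg" where
  "fa_gen x = Poly_Mapping.single [x] 1"

text \<open>The congruence (two-sided ideal relation) generated by a set of relations;
the presented algebra is the quotient of the free algebra by it.\<close>
inductive fa_cong :: "('g freealg \<times> 'g freealg) set \<Rightarrow> 'g freealg \<Rightarrow> 'g freealg \<Rightarrow> bool"
  for R where
  rel: "(a, b) \<in> R \<Longrightarrow> fa_cong R a b"
| refl: "fa_cong R a a"
| sym: "fa_cong R a b \<Longrightarrow> fa_cong R b a"
| trans: "fa_cong R a b \<Longrightarrow> fa_cong R b c \<Longrightarrow> fa_cong R a c"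
| add: "fa_cong R a b \<Longrightarrow> fa_cong R c d \<Longrightarrow> fa_cong R (a + c) (b + d)"
| mult_left: "fa_cong R a b \<Longrightarrow> fa_cong R (fa_mul c a) (fa_mul c b)"
| mult_right: "fa_cong R a b \<Longrightarrow> fa_cong R (fa_mul a c) (fa_mul b c)"

datatype bgen = bE nat | bZ nat
datatype egen = eE nat | eG nat

abbreviation "fa_mul3 a b c \<equiv> fa_mul a (fa_mul b c)"

text \<open>Generators are indexed by nat; those with index outside [n-1] = {1..<n} are
set to 0 by extra relations, so the quotient is exactly the presented algebra.\<close>

definition bH_rels :: "nat \<Rightarrow> (bgen freealg \<times> bgen freealg) set" where
  "bH_rels n =
     (let e = (\<lambda>i. fa_gen (bE i)); z = (\<lambda>i. fa_gen (bZ i)); I = {1..<n} in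
       {(fa_mul (e i) (e i), e i) | i. i \<in> I}
     \<union> {(fa_mul (e i) (e j), fa_mul (e j) (e i)) | i j. i \<in> I \<and> j \<in> I}
     \<union> {(fa_mul3 (z i) (z j) (z i), fa_mul3 (z j) (z i) (z j)) | i j.
           i \<in> I \<and> j \<in> I \<and> (i = j + 1 \<or> j = i + 1)}
     \<union> {(fa_mul (z i) (z j), fa_mul (z j) (z i)) | i j.
           i \<in> I \<and> j \<in> I \<and> (i > j + 1 \<or> j > i + 1)}
     \<union> {(fa_mul (e i) (z i), z i) | i. i \<in> I}
     \<union> {(fa_mul (e i) (z j), fa_mul (z j) (e i)) | i j. i \<in> I \<and> j \<in> I}
     \<union> {(fa_mul (z i) (z i), e i + fa_smult (qL - qinvL) (z i)) | i. i \<in> I}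
     \<union> {(e i, 0) | i. i \<notin> I} \<union> {(z i, 0) | i. i \<notin> I})"

definition E_rels :: "nat \<Rightarrow> (egen freealg \<times> egen freealg) set" where
  "E_rels n =
     (let e = (\<lambda>i. fa_gen (eE i)); g = (\<lambda>i. fa_gen (eG i)); I = {1..<n} in
       {(fa_mul (e i) (e i), e i) | i. i \<in> I}
     \<union> {(fa_mul (e i) (e j), fa_mul (e j) (e i)) | i j. i \<in> I \<and> j \<in> I}
     \<union> {(fa_mul3 (g i) (g j) (g i), fa_mul3 (g j) (g i) (g j)) | i j.
           i \<in> I \<and> j \<in> I \<and> (i = j + 1 \<or> j = i + 1)}
     \<union> {(fa_mul (g i) (g j), fa_mul (g j) (g i)) | i j.
           i \<in> I \<and> j \<in> I \<and> (i > j + 1 \<or> j > i + 1)}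
     \<union> {(fa_mul (g i) (e i), fa_mul (e i) (g i)) | i. i \<in> I}
     \<union> {(fa_mul (g i) (e j), fa_mul (e j) (g i)) | i j.
           i \<in> I \<and> j \<in> I \<and> (i > j + 1 \<or> j > i + 1)}
     \<union> {(fa_mul3 (e i) (g j) (g i), fa_mul3 (g j) (g i) (e j)) | i j.
           i \<in> I \<and> j \<in> I \<and> (i = j + 1 \<or> j = i + 1)}
     \<union> {(fa_mul3 (e i) (e j) (g j), fa_mul3 (e i) (g j) (e i)) | i j.
           i \<in> I \<and> j \<in> I \<and> (i = j + 1 \<or> j = i + 1)}
     \<union> {(fa_mul3 (e i) (g j) (e i), fa_mul3 (g j) (e i) (e j)) | i j.
           i \<in> I \<and> j \<in> I \<and> (i = j + 1 \<or> j = i + 1)}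
     \<union> {(fa_mul (g i) (g i), fa_one + fa_smult (qL - qinvL) (fa_mul (e i) (g i))) | i. i \<in> I}
     \<union> {(e i, 0) | i. i \<notin> I} \<union> {(g i, 0) | i. i \<notin> I})"

abbreviation bH_eq :: "nat \<Rightarrow> bgen freealg \<Rightarrow> bgen freealg \<Rightarrow> bool" where
  "bH_eq n \<equiv> fa_cong (bH_rels n)"
abbreviation E_eq :: "nat \<Rightarrow> egen freealg \<Rightarrow> egen freealg \<Rightarrow> bool" where
  "E_eq n \<equiv> fa_cong (E_rels n)"

text \<open>A map on representatives that is compatible with the defining congruences and is
additive, S-linear, multiplicative and unital modulo the target congruence; such maps
are exactly S-algebra homomorphisms between the quotient algebras.\<close>
definition pres_alg_hom ::
  "('a freealg \<Rightarrow> 'a freealg \<Rightarrow> bool) \<Rightarrow> ('b freealg \<Rightarrow> 'b freealg \<Rightarrow> bool)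
   \<Rightarrow> ('a freealg \<Rightarrow> 'b freealg) \<Rightarrow> bool" where
  "pres_alg_hom EqA EqB f \<longleftrightarrow>
     (\<forall>x y. EqA x y \<longrightarrow> EqB (f x) (f y)) \<and>
     (\<forall>x y. EqB (f (x + y)) (f x + f y)) \<and>
     (\<forall>c x. EqB (f (fa_smult c x)) (fa_smult c (f x))) \<and>
     (\<forall>x y. EqB (f (fa_mul x y)) (fa_mul (f x) (f y))) \<and>
     EqB (f fa_one) fa_one"

end

theory Submission
  imports Defs
begin

instantiation list :: (type) monoid_add
begin
definition zero_list :: "'a list" where "zero_list = []"
definition plus_list :: "'a list \<Rightarrow> 'a list \<Rightarrow> 'a list" where "plus_list u v = u @ v"
instance by standard (auto simp: zero_list_def plus_list_def)
end

lemma pm_expand: "p = (\<Sum>u\<in>Poly_Mapping.keys p. Poly_Mapping.single u (Poly_Mapping.lookup p u))"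
  by (rule poly_mapping_eqI) (auto simp: lookup_sum lookup_single when_def in_keys_iff)

lemma fa_mul_eq: "fa_mul p r = p * r"
proof -
  have "p * r = (\<Sum>u\<in>Poly_Mapping.keys p. Poly_Mapping.single u (Poly_Mapping.lookup p u)) *
     (\<Sum>v\<in>Poly_Mapping.keys r. Poly_Mapping.single v (Poly_Mapping.lookup r v))"
    using pm_expand[of p] pm_expand[of r] by simp
  also have "\<dots> = fa_mul p r"
    by (simp add: fa_mul_def sum_distrib_left sum_distrib_right mult_single plus_list_def)
       (rule sum.swap)
  finally show ?thesis by simp
qed

definition W :: "'g list \<Rightarrow> 'g freealg" where "W w = Poly_Mapping.single w 1"

lemma W_mult[simp]: "W u * W v = W (u @ v)"
  by (simp add: W_def mult_single plus_list_def)

lemma W_mult_assoc[simp]: "W u * (W v * x) = W (u @ v) * x"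
  by (simp add: mult.assoc[symmetric])

lemma smult_W[simp]: "Poly_Mapping.single [] c * W w = Poly_Mapping.single w c"
  by (simp add: W_def mult_single plus_list_def)

lemma W_single[simp]: "W u * Poly_Mapping.single w c = Poly_Mapping.single (u @ w) c"
  by (simp add: W_def mult_single plus_list_def)

lemma fa_gen_W: "fa_gen x = W [x]"
  by (simp add: fa_gen_def W_def)

lemma fa_one_eq: "(fa_one :: 'g freealg) = 1"
proof -
  have "Poly_Mapping.single (0::'g list) (1::laurent) = 1" by (rule single_one)
  thus ?thesis by (simp add: zero_list_def fa_one_def fa_scal_def)
qed

lemma fa_smult_eq: "fa_smult c p = Poly_Mapping.single [] c * p"
  by (simp add: fa_smult_def fa_scal_def fa_mul_eq)

lemmas fa_simps = fa_mul_eq fa_gen_W fa_one_eq fa_smult_eq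

fun phi :: "bgen \<Rightarrow> egen list" where
  "phi (bE i) = [eE i]" | "phi (bZ i) = [eE i, eG i]"

definition psi :: "bgen list \<Rightarrow> egen list" where "psi w = concat (map phi w)"

lemma psi_append: "psi (u @ v) = psi u @ psi v" by (simp add: psi_def)

definition iota :: "bgen freealg \<Rightarrow> egen freealg" where
  "iota p = (\<Sum>w\<in>Poly_Mapping.keys p. Poly_Mapping.single (psi w) (Poly_Mapping.lookup p w))"

lemma iota_superset:
  assumes "finite S" "Poly_Mapping.keys p \<subseteq> S"
  shows "iota p = (\<Sum>w\<in>S. Poly_Mapping.single (psi w) (Poly_Mapping.lookup p w))"
  unfolding iota_def
  by (rule sum.mono_neutral_left) (auto simp: assms in_keys_iff)

lemma iota_add: "iota (x + y) = iota x + iota y"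
proof -
  let ?S = "Poly_Mapping.keys x \<union> Poly_Mapping.keys y"
  have "iota (x + y) = (\<Sum>w\<in>?S. Poly_Mapping.single (psi w) (Poly_Mapping.lookup (x + y) w))"
    by (rule iota_superset) (auto simp: in_keys_iff lookup_add)
  also have "\<dots> = (\<Sum>w\<in>?S. Poly_Mapping.single (psi w) (Poly_Mapping.lookup x w))
     + (\<Sum>w\<in>?S. Poly_Mapping.single (psi w) (Poly_Mapping.lookup y w))"
    by (simp add: lookup_add single_add sum.distrib)
  also have "\<dots> = iota x + iota y"
    by (simp add: iota_superset[symmetric])
  finally show ?thesis .
qed

lemma iota_zero[simp]: "iota 0 = 0" by (simp add: iota_def)

lemma iota_sum: "iota (sum f S) = (\<Sum>s\<in>S. iota (f s))"
  by (induction S rule: infinite_finite_induct) (auto simp: iota_add)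

lemma iota_single[simp]: "iota (Poly_Mapping.single w c) = Poly_Mapping.single (psi w) c"
  by (cases "c = 0") (auto simp: iota_def)

lemma iota_W[simp]: "iota (W w) = W (psi w)"
  by (simp add: W_def)

lemma iota_mult: "iota (x * y) = iota x * iota y"
proof -
  have "iota (x * y) = iota (fa_mul x y)" by (simp add: fa_mul_eq)
  also have "\<dots> = (\<Sum>u\<in>Poly_Mapping.keys x. \<Sum>v\<in>Poly_Mapping.keys y.
      Poly_Mapping.single (psi u @ psi v) (Poly_Mapping.lookup x u * Poly_Mapping.lookup y v))"
    by (simp add: fa_mul_def iota_sum psi_append)
  also have "\<dots> = iota x * iota y"
    by (simp add: iota_def sum_distrib_left sum_distrib_right mult_single plus_list_def)
       (rule sum.swap)
  finally show ?thesis .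
qed

lemma iota_smult: "iota (fa_smult c x) = fa_smult c (iota x)"
  by (simp add: fa_smult_eq iota_mult psi_def)

lemma iota_one: "iota 1 = 1"
  using iota_single[of "[]" 1] by (simp add: fa_one_eq[symmetric] fa_one_def fa_scal_def psi_def)


lemmas [trans] = fa_cong.trans

abbreviation wr :: "nat \<Rightarrow> egen list \<Rightarrow> egen list \<Rightarrow> bool" where
  "wr n u v \<equiv> E_eq n (W u) (W v)"

lemma ctx: "E_eq n a b \<Longrightarrow> E_eq n (x * a * y) (x * b * y)"
  using fa_cong.mult_left[of "E_rels n" "fa_mul a y" "fa_mul b y" x]
    fa_cong.mult_right[of "E_rels n" a b y]
  by (simp add: fa_mul_eq mult.assoc)

lemma step: "wr n l r \<Longrightarrow> wr n (x @ l @ y) (x @ r @ y)"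
  using ctx[of n "W l" "W r" "W x" "W y"] by simp

lemma stepI: "wr n l r \<Longrightarrow> u = x @ l @ y \<Longrightarrow> v = x @ r @ y \<Longrightarrow> wr n u v"
  using step by blast

lemma relE: "(a, b) \<in> E_rels n \<Longrightarrow> E_eq n a b" by (rule fa_cong.rel)

context
  fixes n i j :: nat
  assumes i: "i \<in> {1..<n}" and j: "j \<in> {1..<n}"
begin

lemma R1: "wr n [eE i, eE i] [eE i]"
proof -
  have "(fa_mul (fa_gen (eE i)) (fa_gen (eE i)), fa_gen (eE i)) \<in> E_rels n"
    unfolding E_rels_def Let_def apply (rule UnI1, rule UnI1, rule UnI1, rule UnI1, rule UnI1, rule UnI1, rule UnI1, rule UnI1, rule UnI1, rule UnI1, rule UnI1) using i by blast
  from relE[OF this] show ?thesis by (simp add: fa_simps)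
qed

lemma R2: "wr n [eE i, eE j] [eE j, eE i]"
proof -
  have "(fa_mul (fa_gen (eE i)) (fa_gen (eE j)), fa_mul (fa_gen (eE j)) (fa_gen (eE i))) \<in> E_rels n"
    unfolding E_rels_def Let_def apply (rule UnI1, rule UnI1, rule UnI1, rule UnI1, rule UnI1, rule UnI1, rule UnI1, rule UnI1, rule UnI1, rule UnI1, rule UnI2) using i j by blast
  from relE[OF this] show ?thesis by (simp add: fa_simps)
qed

lemma R3: "i = j + 1 \<or> j = i + 1 \<Longrightarrow> wr n [eG i, eG j, eG i] [eG j, eG i, eG j]"
proof -
  assume a: "i = j + 1 \<or> j = i + 1"
  have "(fa_mul3 (fa_gen (eG i)) (fa_gen (eG j)) (fa_gen (eG i)),
         fa_mul3 (fa_gen (eG j)) (fa_gen (eG i)) (fa_gen (eG j))) \<in> E_rels n"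
    unfolding E_rels_def Let_def apply (rule UnI1, rule UnI1, rule UnI1, rule UnI1, rule UnI1, rule UnI1, rule UnI1, rule UnI1, rule UnI1, rule UnI2) using i j a by blast
  from relE[OF this] show ?thesis by (simp add: fa_simps)
qed

lemma R4: "i > j + 1 \<or> j > i + 1 \<Longrightarrow> wr n [eG i, eG j] [eG j, eG i]"
proof -
  assume a: "i > j + 1 \<or> j > i + 1"
  have "(fa_mul (fa_gen (eG i)) (fa_gen (eG j)), fa_mul (fa_gen (eG j)) (fa_gen (eG i))) \<in> E_rels n"
    unfolding E_rels_def Let_def apply (rule UnI1, rule UnI1, rule UnI1, rule UnI1, rule UnI1, rule UnI1, rule UnI1, rule UnI1, rule UnI2) using i j a by blast
  from relE[OF this] show ?thesis by (simp add: fa_simps)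
qed

lemma R5: "wr n [eG i, eE i] [eE i, eG i]"
proof -
  have "(fa_mul (fa_gen (eG i)) (fa_gen (eE i)), fa_mul (fa_gen (eE i)) (fa_gen (eG i))) \<in> E_rels n"
    unfolding E_rels_def Let_def apply (rule UnI1, rule UnI1, rule UnI1, rule UnI1, rule UnI1, rule UnI1, rule UnI1, rule UnI2) using i by blast
  from relE[OF this] show ?thesis by (simp add: fa_simps)
qed

lemma R6: "i > j + 1 \<or> j > i + 1 \<Longrightarrow> wr n [eG i, eE j] [eE j, eG i]"
proof -
  assume a: "i > j + 1 \<or> j > i + 1"
  have "(fa_mul (fa_gen (eG i)) (fa_gen (eE j)), fa_mul (fa_gen (eE j)) (fa_gen (eG i))) \<in> E_rels n"
    unfolding E_rels_def Let_def apply (rule UnI1, rule UnI1, rule UnI1, rule UnI1, rule UnI1, rule UnI1, rule UnI2) using i j a by blast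
  from relE[OF this] show ?thesis by (simp add: fa_simps)
qed

lemma R7: "i = j + 1 \<or> j = i + 1 \<Longrightarrow> wr n [eE i, eG j, eG i] [eG j, eG i, eE j]"
proof -
  assume a: "i = j + 1 \<or> j = i + 1"
  have "(fa_mul3 (fa_gen (eE i)) (fa_gen (eG j)) (fa_gen (eG i)),
         fa_mul3 (fa_gen (eG j)) (fa_gen (eG i)) (fa_gen (eE j))) \<in> E_rels n"
    unfolding E_rels_def Let_def apply (rule UnI1, rule UnI1, rule UnI1, rule UnI1, rule UnI1, rule UnI2) using i j a by blast
  from relE[OF this] show ?thesis by (simp add: fa_simps)
qed

lemma R8: "i = j + 1 \<or> j = i + 1 \<Longrightarrow> wr n [eE i, eE j, eG j] [eE i, eG j, eE i]"
proof -
  assume a: "i = j + 1 \<or> j = i + 1"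
  have "(fa_mul3 (fa_gen (eE i)) (fa_gen (eE j)) (fa_gen (eG j)),
         fa_mul3 (fa_gen (eE i)) (fa_gen (eG j)) (fa_gen (eE i))) \<in> E_rels n"
    unfolding E_rels_def Let_def apply (rule UnI1, rule UnI1, rule UnI1, rule UnI1, rule UnI2) using i j a by blast
  from relE[OF this] show ?thesis by (simp add: fa_simps)
qed

lemma R9: "i = j + 1 \<or> j = i + 1 \<Longrightarrow> wr n [eE i, eG j, eE i] [eG j, eE i, eE j]"
proof -
  assume a: "i = j + 1 \<or> j = i + 1"
  have "(fa_mul3 (fa_gen (eE i)) (fa_gen (eG j)) (fa_gen (eE i)),
         fa_mul3 (fa_gen (eG j)) (fa_gen (eE i)) (fa_gen (eE j))) \<in> E_rels n"
    unfolding E_rels_def Let_def apply (rule UnI1, rule UnI1, rule UnI1, rule UnI2) using i j a by blast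
  from relE[OF this] show ?thesis by (simp add: fa_simps)
qed

lemma RQ: "E_eq n (W [eG i, eG i]) (1 + Poly_Mapping.single [eE i, eG i] (qL - qinvL))"
proof -
  have "(fa_mul (fa_gen (eG i)) (fa_gen (eG i)),
         fa_one + fa_smult (qL - qinvL) (fa_mul (fa_gen (eE i)) (fa_gen (eG i)))) \<in> E_rels n"
    unfolding E_rels_def Let_def apply (rule UnI1, rule UnI1, rule UnI2) using i by blast
  from relE[OF this] show ?thesis by (simp add: fa_simps)
qed

lemma R89: "i = j + 1 \<or> j = i + 1 \<Longrightarrow> wr n [eG j, eE i, eE j] [eE i, eE j, eG j]"
proof -
  assume a: "i = j + 1 \<or> j = i + 1"
  have "wr n [eG j, eE i, eE j] [eE i, eG j, eE i]" using fa_cong.sym[OF R9[OF a]] .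
  also have "E_eq n \<dots> (W [eE i, eE j, eG j])" using fa_cong.sym[OF R8[OF a]] .
  finally show ?thesis .
qed

end



lemma stepS: "wr n r l \<Longrightarrow> u = x @ l @ y \<Longrightarrow> v = x @ r @ y \<Longrightarrow> wr n u v"
  using stepI[OF fa_cong.sym] by blast

lemma Ladj:
  assumes i: "i \<in> {1..<n}" and j: "j \<in> {1..<n}" and a: "i = j + 1 \<or> j = i + 1"
  shows "wr n [eE i, eG i, eE j, eG j, eE i, eG i] [eE i, eE j, eG i, eG j, eG i]"
proof -
  have a': "j = i + 1 \<or> i = j + 1" using a by auto
  have "wr n [eE i, eG i, eE j, eG j, eE i, eG i] [eG i, eE i, eE j, eG j, eE i, eG i]"
    by (rule stepS[OF R5[OF i j], where x = "[]" and y = "[eE j, eG j, eE i, eG i]"]) simp_all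
  also have "E_eq n \<dots> (W [eG i, eE j, eE i, eG j, eE i, eG i])"
    by (rule stepI[OF R2[OF i j], where x = "[eG i]" and y = "[eG j, eE i, eG i]"]) simp_all
  also have "E_eq n \<dots> (W [eE j, eE i, eG i, eG j, eE i, eG i])"
    by (rule stepI[OF R89[OF j i a'], where x = "[]" and y = "[eG j, eE i, eG i]"]) simp_all
  also have "E_eq n \<dots> (W [eE j, eE i, eE j, eG i, eG j, eG i])"
    by (rule stepS[OF R7[OF j i a'], where x = "[eE j, eE i]" and y = "[eG i]"]) simp_all
  also have "E_eq n \<dots> (W [eE j, eE j, eE i, eG i, eG j, eG i])"
    by (rule stepI[OF R2[OF i j], where x = "[eE j]" and y = "[eG i, eG j, eG i]"]) simp_all
  also have "E_eq n \<dots> (W [eE j, eE i, eG i, eG j, eG i])"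
    by (rule stepI[OF R1[OF j i], where x = "[]" and y = "[eE i, eG i, eG j, eG i]"]) simp_all
  also have "E_eq n \<dots> (W [eE i, eE j, eG i, eG j, eG i])"
    by (rule stepI[OF R2[OF j i], where x = "[]" and y = "[eG i, eG j, eG i]"]) simp_all
  finally show ?thesis .
qed

lemma Rel3:
  assumes i: "i \<in> {1..<n}" and j: "j \<in> {1..<n}" and a: "i = j + 1 \<or> j = i + 1"
  shows "wr n [eE i, eG i, eE j, eG j, eE i, eG i] [eE j, eG j, eE i, eG i, eE j, eG j]"
proof -
  have a': "j = i + 1 \<or> i = j + 1" using a by auto
  have "wr n [eE j, eG j, eE i, eG i, eE j, eG j] [eE j, eE i, eG j, eG i, eG j]"
    by (rule Ladj[OF j i a'])
  also have "E_eq n \<dots> (W [eE i, eE j, eG j, eG i, eG j])"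
    by (rule stepI[OF R2[OF j i], where x = "[]" and y = "[eG j, eG i, eG j]"]) simp_all
  also have "E_eq n \<dots> (W [eE i, eE j, eG i, eG j, eG i])"
    by (rule stepS[OF R3[OF i j a], where x = "[eE i, eE j]" and y = "[]"]) simp_all
  finally have "wr n [eE j, eG j, eE i, eG i, eE j, eG j] [eE i, eE j, eG i, eG j, eG i]" .
  with Ladj[OF i j a] show ?thesis by (blast intro: fa_cong.trans fa_cong.sym)
qed

lemma Rel4:
  assumes i: "i \<in> {1..<n}" and j: "j \<in> {1..<n}" and a: "i > j + 1 \<or> j > i + 1"
  shows "wr n [eE i, eG i, eE j, eG j] [eE j, eG j, eE i, eG i]"
proof -
  have a': "j > i + 1 \<or> i > j + 1" using a by auto
  have "wr n [eE i, eG i, eE j, eG j] [eE i, eE j, eG i, eG j]"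
    by (rule stepI[OF R6[OF i j a], where x = "[eE i]" and y = "[eG j]"]) simp_all
  also have "E_eq n \<dots> (W [eE j, eE i, eG i, eG j])"
    by (rule stepI[OF R2[OF i j], where x = "[]" and y = "[eG i, eG j]"]) simp_all
  also have "E_eq n \<dots> (W [eE j, eE i, eG j, eG i])"
    by (rule stepI[OF R4[OF i j a], where x = "[eE j, eE i]" and y = "[]"]) simp_all
  also have "E_eq n \<dots> (W [eE j, eG j, eE i, eG i])"
    by (rule stepS[OF R6[OF j i a'], where x = "[eE j]" and y = "[eG i]"]) simp_all
  finally show ?thesis .
qed

lemma Rel5:
  assumes i: "i \<in> {1..<n}"
  shows "wr n [eE i, eE i, eG i] [eE i, eG i]"
  by (rule stepI[OF R1[OF i i], where x = "[]" and y = "[eG i]"]) simp_all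

lemma Rel6:
  assumes i: "i \<in> {1..<n}" and j: "j \<in> {1..<n}"
  shows "wr n [eE i, eE j, eG j] [eE j, eG j, eE i]"
proof -
  consider "i = j" | "i = j + 1 \<or> j = i + 1" | "i > j + 1 \<or> j > i + 1" by linarith
  then show ?thesis
  proof cases
    case 1
    show ?thesis unfolding 1
      by (rule stepS[OF R5[OF j j], where x = "[eE j]" and y = "[]"]) simp_all
  next
    case 2
    have a': "j = i + 1 \<or> i = j + 1" using 2 by auto
    have "wr n [eE j, eG j, eE i] [eG j, eE j, eE i]"
      by (rule stepS[OF R5[OF j i], where x = "[]" and y = "[eE i]"]) simp_all
    also have "E_eq n \<dots> (W [eG j, eE i, eE j])"
      by (rule stepI[OF R2[OF j i], where x = "[eG j]" and y = "[]"]) simp_all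
    also have "E_eq n \<dots> (W [eE i, eE j, eG j])"
      by (rule R89[OF i j 2])
    finally show ?thesis by (rule fa_cong.sym)
  next
    case 3
    have a': "j > i + 1 \<or> i > j + 1" using 3 by auto
    have "wr n [eE j, eG j, eE i] [eE j, eE i, eG j]"
      by (rule stepI[OF R6[OF j i a'], where x = "[eE j]" and y = "[]"]) simp_all
    also have "E_eq n \<dots> (W [eE i, eE j, eG j])"
      by (rule stepI[OF R2[OF j i], where x = "[]" and y = "[eG j]"]) simp_all
    finally show ?thesis by (rule fa_cong.sym)
  qed
qed

lemma Rel7:
  assumes i: "i \<in> {1..<n}"
  shows "E_eq n (W [eE i, eG i, eE i, eG i]) (W [eE i] + Poly_Mapping.single [eE i, eG i] (qL - qinvL))"
proof -
  have "wr n [eE i, eG i, eE i, eG i] [eE i, eE i, eG i, eG i]"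
    by (rule stepI[OF R5[OF i i], where x = "[eE i]" and y = "[eG i]"]) simp_all
  also have "E_eq n \<dots> (W [eE i, eG i, eG i])"
    by (rule stepI[OF R1[OF i i], where x = "[]" and y = "[eG i, eG i]"]) simp_all
  also have "\<dots> = W [eE i] * W [eG i, eG i] * 1" by simp
  also have "E_eq n \<dots> (W [eE i] * (1 + Poly_Mapping.single [eE i, eG i] (qL - qinvL)) * 1)"
    by (rule ctx[OF RQ[OF i i]])
  also have "\<dots> = W [eE i] + Poly_Mapping.single [] (qL - qinvL) * W [eE i, eE i, eG i]"
    by (simp add: distrib_left)
  also have "E_eq n \<dots> (W [eE i] + Poly_Mapping.single [] (qL - qinvL) * W [eE i, eG i])"
  proof -
    have h: "E_eq n (Poly_Mapping.single [] (qL - qinvL) * W [eE i, eE i, eG i])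
                    (Poly_Mapping.single [] (qL - qinvL) * W [eE i, eG i])"
      using ctx[OF Rel5[OF i], of "Poly_Mapping.single [] (qL - qinvL)" 1] by (simp only: mult_1_right)
    show ?thesis by (rule fa_cong.add[OF fa_cong.refl h])
  qed
  also have "\<dots> = W [eE i] + Poly_Mapping.single [eE i, eG i] (qL - qinvL)" by simp
  finally show ?thesis .
qed


lemma Ezero_e: "i \<notin> {1..<n} \<Longrightarrow> E_eq n (W [eE i]) 0"
proof -
  assume i: "i \<notin> {1..<n}"
  have "(fa_gen (eE i), 0) \<in> E_rels n"
    unfolding E_rels_def Let_def apply (rule UnI1, rule UnI2) using i by blast
  from relE[OF this] show ?thesis by (simp add: fa_simps)
qed

lemma Ezero_z: "i \<notin> {1..<n} \<Longrightarrow> E_eq n (W [eE i, eG i]) 0"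
  using ctx[OF Ezero_e, of i n 1 "W [eG i]"] by simp

lemma relB: "(a, b) \<in> bH_rels n \<Longrightarrow> E_eq n (iota a) (iota b)"
  unfolding bH_rels_def Let_def
  apply (elim UnE)
  apply (simp_all only: mem_Collect_eq)
  subgoal by (elim exE conjE) (auto simp: fa_simps psi_def iota_add intro!: R1)
  subgoal by (elim exE conjE) (auto simp: fa_simps psi_def iota_add intro!: R2)
  subgoal by (elim exE conjE) (auto simp: fa_simps psi_def iota_add intro!: Rel3)
  subgoal by (elim exE conjE) (auto simp: fa_simps psi_def iota_add intro!: Rel4)
  subgoal by (elim exE conjE) (auto simp: fa_simps psi_def iota_add intro!: Rel5)
  subgoal by (elim exE conjE) (auto simp: fa_simps psi_def iota_add intro!: Rel6)
  subgoal by (elim exE conjE) (auto simp: fa_simps psi_def iota_add intro!: Rel7)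
  subgoal by (elim exE conjE) (auto simp: fa_simps psi_def iota_add intro!: Ezero_e)
  subgoal by (elim exE conjE) (auto simp: fa_simps psi_def iota_add intro!: Ezero_z)
  done

lemma iota_cong: "fa_cong (bH_rels n) x y \<Longrightarrow> E_eq n (iota x) (iota y)"
proof (induction rule: fa_cong.induct)
  case (rel a b) then show ?case by (rule relB)
next
  case (refl a) then show ?case by (rule fa_cong.refl)
next
  case (sym a b) then show ?case using fa_cong.sym by blast
next
  case (trans a b c) then show ?case using fa_cong.trans by blast
next
  case (add a b c d) then show ?case by (simp add: iota_add fa_cong.add)
next
  case (mult_left a b c) then show ?case
    using fa_cong.mult_left[OF mult_left.IH, of "iota c"] by (simp add: fa_mul_eq iota_mult)
next
  case (mult_right a b c) then show ?case
    using fa_cong.mult_right[OF mult_right.IH, of "iota c"] by (simp add: fa_mul_eq iota_mult)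
qed

theorem proposition5p1:
  fixes n :: nat
  shows "\<exists>\<iota>. pres_alg_hom (bH_eq n) (E_eq n) \<iota> \<and>
           (\<forall>i\<in>{1..<n}.
              E_eq n (\<iota> (fa_gen (bE i))) (fa_gen (eE i)) \<and>
              E_eq n (\<iota> (fa_gen (bZ i))) (fa_mul (fa_gen (eE i)) (fa_gen (eG i))))"
proof (intro exI conjI ballI)
  show "pres_alg_hom (bH_eq n) (E_eq n) iota"
    unfolding pres_alg_hom_def
    by (auto simp: iota_cong iota_add iota_smult fa_mul_eq iota_mult fa_one_eq iota_one
        intro: fa_cong.refl)
  fix i assume "i \<in> {1..<n}"
  show "E_eq n (iota (fa_gen (bE i))) (fa_gen (eE i))"
    by (simp add: fa_simps psi_def fa_cong.refl)
  show "E_eq n (iota (fa_gen (bZ i))) (fa_mul (fa_gen (eE i)) (fa_gen (eG i)))"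
    by (simp add: fa_simps psi_def fa_cong.refl)
qed

end
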